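(* Let $p$ be prime and let $k\ge2$, $\ell\ge1$ be integers. Let $c_{i_1},\dots,c_{i_{k-1}}$ be $k-1$ pairwise distinct codewords of a $p$-ary prefix-free code with lengths $\ell_{i_1}\le\cdots\le\ell_{i_{k-1}}$, let $y_{i_m}=\sum_{t=0}^{\ell_{i_m}-1}c_{i_m,t}x^t\in F_p[x]$, and let $L_{i_m}=(\ell_{i_m}-1)(k-1)+\ell$. Let $r_0,\dots,r_{k-2}$ be independent random polynomials, each uniformly distributed over the polynomials in $F_p[x]$ of degree less than $L_{i_{k-1}}$. For a secret $s\in F_p[x]$ of degree less than $\ell$ define the random shares $$Z^{(s)}_{i_m}\equiv\sum_{j=0}^{k-2}r_j\,y_{i_m}^{\,j}+s\,y_{i_m}^{\,k-1}\pmod{x^{L_{i_m}}},\qquad 1\le m\le k-1,$$ each taken as a polynomial of degree less than $L_{i_m}$. Then for any two secrets $s_0,s_1$ of degree less than $\ell$, the random tuples $(Z^{(s_0)}_{i_1},\dots,Z^{(s_0)}_{i_{k-1}})$ and $(Z^{(s_1)}_{i_1},\dots,Z^{(s_1)}_{i_{k-1}})$ have the same probability distribution.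
   Context: A $p$-ary prefix-free code is a set of finite strings over the alphabet $F_p$ none of which is a prefix of another. $F_p[x]$ is the polynomial ring over the finite field $F_p$. *)

theory Defs
  imports "Berlekamp_Zassenhaus.Finite_Field" "HOL-Library.Sublist" "HOL-Probability.Probability"
begin

text \<open>The field F_p is modelled as the type 'p mod_ring with 'p of class prime_card,
  i.e. CARD('p) = p is prime. Strings over F_p are lists.\<close>

definition prefix_free :: "'a list set \<Rightarrow> bool" where
  "prefix_free C \<longleftrightarrow> (\<forall>u\<in>C. \<forall>v\<in>C. u \<noteq> v \<longrightarrow> \<not> prefix u v)"

definition codeword_poly :: "'a::comm_ring_1 list \<Rightarrow> 'a poly" where
  "codeword_poly c = (\<Sum>t<length c. monom (c ! t) t)"

definition polys_deg_less :: "nat \<Rightarrow> 'a::zero poly set" where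
  "polys_deg_less n = {q. degree q < n \<and> (n = 0 \<longrightarrow> q = 0)}"

definition share_len :: "nat \<Rightarrow> nat \<Rightarrow> nat \<Rightarrow> nat" where
  "share_len k l len = (len - 1) * (k - 1) + l"

definition share :: "nat \<Rightarrow> nat \<Rightarrow> 'a::field list \<Rightarrow> (nat \<Rightarrow> 'a poly) \<Rightarrow> 'a poly \<Rightarrow> 'a poly" where
  "share k l c r s =
     ((\<Sum>j<k-1. r j * codeword_poly c ^ j) + s * codeword_poly c ^ (k-1))
       mod monom 1 (share_len k l (length c))"

definition shares_dist ::
  "nat \<Rightarrow> nat \<Rightarrow> (nat \<Rightarrow> 'a::{field,finite} list) \<Rightarrow> 'a poly \<Rightarrow> 'a poly list pmf" where
  "shares_dist k l c s =
     map_pmf (\<lambda>r. map (\<lambda>m. share k l (c m) r s) [1..<k])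
       (Pi_pmf {..<k-1} 0
          (\<lambda>_. pmf_of_set (polys_deg_less (share_len k l (length (c (k-1)))))))"

end

theory Submission
  imports Defs
begin
lemma finite_deg_less: "finite {q :: 'a::{zero,finite} poly. degree q < n}"
proof -
  have "{q :: 'a poly. degree q < n} \<subseteq> Poly ` {xs. length xs = n}"
  proof
    fix q :: "'a poly" assume "q \<in> {q. degree q < n}"
    hence d: "degree q < n" by simp
    have "q = Poly (map (coeff q) [0..<n])"
      by (rule poly_eqI) (use d in \<open>auto simp: nth_default_def coeff_eq_0\<close>)
    thus "q \<in> Poly ` {xs. length xs = n}" by force
  qed
  moreover have "finite {xs :: 'a list. length xs = n}"
    using finite_lists_length_eq[of "UNIV :: 'a set" n] by simp
  ultimately show ?thesis by (meson finite_surj)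
qed

lemma coeff_mult_deg_bound:
  fixes P Q :: "'a::field poly poly"
  assumes "\<And>i. degree (coeff P i) \<le> a" "\<And>i. degree (coeff Q i) \<le> b"
  shows "degree (coeff (P * Q) i) \<le> a + b"
  unfolding coeff_mult
  by (rule degree_sum_le) (auto intro: order.trans[OF degree_mult_le] add_mono assms)

lemma coeff_prod_deg_bound:
  fixes f :: "'b \<Rightarrow> 'a::field poly poly"
  assumes "finite A" "\<And>x i. x \<in> A \<Longrightarrow> degree (coeff (f x) i) \<le> D"
  shows "degree (coeff (prod f A) i) \<le> card A * D"
  using assms
proof (induction A arbitrary: i rule: finite_induct)
  case empty
  then show ?case by (cases i) auto
next
  case (insert x F)
  have "degree (coeff (f x * prod f F) i) \<le> D + card F * D"
    by (rule coeff_mult_deg_bound) (use insert in auto)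
  then show ?case using insert by simp
qed

lemma coeff_lin_deg: "degree (coeff [:-y, 1:] i) \<le> degree (y :: 'a::field poly)"
  by (cases i; cases "i - 1") (auto simp: coeff_pCons)

lemma codeword_poly_deg: "degree (codeword_poly c) \<le> length c - 1"
  unfolding codeword_poly_def
  by (rule degree_sum_le) (auto intro: order.trans[OF degree_monom_le])


theorem mainTheorem8:
  fixes C :: "'p::prime_card mod_ring list set"
    and c :: "nat \<Rightarrow> 'p mod_ring list"
    and k l :: nat
    and s0 s1 :: "'p mod_ring poly"
  assumes "k \<ge> 2" and "l \<ge> 1"
    and "prefix_free C"
    and "\<forall>m\<in>{1..k-1}. c m \<in> C"
    and "inj_on c {1..k-1}"
    and "\<forall>m m'. 1 \<le> m \<and> m \<le> m' \<and> m' \<le> k-1 \<longrightarrow> length (c m) \<le> length (c m')"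
    and "s0 \<in> polys_deg_less l" and "s1 \<in> polys_deg_less l"
  shows "shares_dist k l c s0 = shares_dist k l c s1"
proof -
  let ?Lm = "length (c (k-1))"
  define L where "L = share_len k l ?Lm"
  define S :: "'p mod_ring poly set" where "S = polys_deg_less L"
  define d where "d = s1 - s0"
  define ys where "ys m = codeword_poly (c m)" for m
  define Q where "Q = (\<Prod>m\<in>{1..k-1}. [:-ys m, 1:])"
  define \<delta> where "\<delta> j = (if j < k-1 then -(d * coeff Q j) else 0)" for j
  have L1: "L \<ge> 1" using assms(2) by (simp add: L_def share_len_def)
  have S_eq: "S = {q. degree q < L}" using L1 by (auto simp: S_def polys_deg_less_def)
  have finS: "finite S" unfolding S_eq by (rule finite_deg_less)
  have ysdeg: "degree (ys m) \<le> ?Lm - 1" if "m \<in> {1..k-1}" for m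
  proof -
    have "length (c m) \<le> ?Lm" using assms(6) that by auto
    thus ?thesis using codeword_poly_deg[of "c m"] unfolding ys_def by linarith
  qed
  have Qc: "degree (coeff Q j) \<le> (k-1) * (?Lm - 1)" for j
  proof -
    have "degree (coeff Q j) \<le> card {1..k-1} * (?Lm - 1)"
      unfolding Q_def
      by (rule coeff_prod_deg_bound) (use ysdeg coeff_lin_deg order.trans in blast)+
    thus ?thesis by simp
  qed
  have dd: "degree d \<le> l - 1"
  proof -
    have "degree s0 < l" "degree s1 < l" using assms(7,8) by (auto simp: polys_deg_less_def)
    thus ?thesis unfolding d_def using degree_diff_le_max[of s1 s0] by linarith
  qed
  have \<delta>S: "\<delta> j \<in> S" for j
  proof (cases "j < k-1")
    case True
    have "degree (\<delta> j) \<le> degree d + degree (coeff Q j)"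
      using True degree_mult_le[of d "coeff Q j"] by (simp add: \<delta>_def)
    also have "\<dots> \<le> (l - 1) + (k-1) * (?Lm - 1)" using dd Qc[of j] by linarith
    also have "\<dots> < L" using assms(2) by (simp add: L_def share_len_def mult.commute)
    finally show ?thesis by (simp add: S_eq)
  next
    case False thus ?thesis using L1 by (simp add: S_eq \<delta>_def)
  qed
  have degQ: "degree Q = k - 1"
    unfolding Q_def by (subst degree_prod_eq_sum_degree) auto
  have lcQ: "lead_coeff Q = 1"
    unfolding Q_def lead_coeff_prod by simp
  have rootQ: "poly Q (ys m) = 0" if "m \<in> {1..k-1}" for m
    unfolding Q_def poly_prod using that by (intro prod_zero) auto
  have sumQ: "(\<Sum>j<k-1. coeff Q j * ys m ^ j) = - (ys m ^ (k-1))" if "m \<in> {1..k-1}" for m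
  proof -
    have "0 = poly Q (ys m)" using rootQ[OF that] by simp
    also have "\<dots> = (\<Sum>j<Suc (k-1). coeff Q j * ys m ^ j)"
      unfolding poly_altdef degQ lessThan_Suc_atMost ..
    also have "\<dots> = (\<Sum>j<k-1. coeff Q j * ys m ^ j) + ys m ^ (k-1)"
      using lcQ degQ by simp
    finally show ?thesis by (simp add: eq_neg_iff_add_eq_0)
  qed
  have sum\<delta>: "(\<Sum>j<k-1. \<delta> j * ys m ^ j) = d * ys m ^ (k-1)" if "m \<in> {1..k-1}" for m
  proof -
    have "(\<Sum>j<k-1. \<delta> j * ys m ^ j) = - d * (\<Sum>j<k-1. coeff Q j * ys m ^ j)"
      by (simp add: \<delta>_def sum_distrib_left sum_negf mult.assoc)
    thus ?thesis using sumQ[OF that] by simp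
  qed
  define f where "f r = (\<lambda>j. r j - \<delta> j)" for r :: "nat \<Rightarrow> 'p mod_ring poly"
  define g where "g s r = map (\<lambda>m. share k l (c m) r s) [1..<k]" for s r
  have gf: "g s1 (f r) = g s0 r" for r
  proof -
    have "share k l (c m) (f r) s1 = share k l (c m) r s0" if "m \<in> set [1..<k]" for m
    proof -
      have m: "m \<in> {1..k-1}" using that by auto
      have "(\<Sum>j<k-1. f r j * ys m ^ j) + s1 * ys m ^ (k-1)
          = (\<Sum>j<k-1. r j * ys m ^ j) - (\<Sum>j<k-1. \<delta> j * ys m ^ j) + s1 * ys m ^ (k-1)"
        by (simp add: f_def left_diff_distrib sum_subtractf)
      also have "\<dots> = (\<Sum>j<k-1. r j * ys m ^ j) + s0 * ys m ^ (k-1)"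
        using sum\<delta>[OF m] by (simp add: d_def algebra_simps)
      finally show ?thesis by (simp add: share_def ys_def)
    qed
    thus ?thesis unfolding g_def by simp
  qed
  define E where "E = PiE_dflt {..<k-1} 0 (\<lambda>_. S)"
  have P: "Pi_pmf {..<k-1} 0 (\<lambda>_. pmf_of_set S) = pmf_of_set E"
    unfolding E_def by (rule Pi_pmf_of_set) (use finS L1 in \<open>auto simp: S_eq intro!: exI[of _ 0]\<close>)
  have finE: "finite E" unfolding E_def using finS by auto
  have E0: "E \<noteq> {}" using L1 by (auto simp: E_def PiE_dflt_def S_eq intro!: exI[of _ "\<lambda>_. 0"])
  have injf: "inj_on f E" unfolding f_def inj_on_def by (auto simp: fun_eq_iff)
  have Sdiff: "a - b \<in> S" "a + b \<in> S" if "a \<in> S" "b \<in> S" for a b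
    using that degree_diff_le_max[of a b] degree_add_le_max[of a b] by (auto simp: S_eq)
  have \<delta>0: "\<delta> j = 0" if "\<not> j < k-1" for j using that by (simp add: \<delta>_def)
  have fE: "f ` E = E"
  proof
    show "f ` E \<subseteq> E"
      using \<delta>S Sdiff \<delta>0 by (auto simp: E_def PiE_dflt_def f_def)
    show "E \<subseteq> f ` E"
    proof
      fix x assume x: "x \<in> E"
      have "(\<lambda>j. x j + \<delta> j) \<in> E"
        using x \<delta>S Sdiff \<delta>0 by (auto simp: E_def PiE_dflt_def)
      moreover have "x = f (\<lambda>j. x j + \<delta> j)" by (simp add: f_def)
      ultimately show "x \<in> f ` E" by blast
    qed
  qed
  have mapP: "map_pmf f (pmf_of_set E) = pmf_of_set E"
    using map_pmf_of_set_inj[OF injf E0 finE] fE by simp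
  have "shares_dist k l c s0 = map_pmf (g s0) (pmf_of_set E)"
    unfolding shares_dist_def P[unfolded S_def L_def] g_def ..
  also have "\<dots> = map_pmf (g s1 \<circ> f) (pmf_of_set E)"
    using gf by (simp add: comp_def)
  also have "\<dots> = map_pmf (g s1) (pmf_of_set E)"
    by (simp add: pmf.map_comp[symmetric] mapP)
  also have "\<dots> = shares_dist k l c s1"
    unfolding shares_dist_def P[unfolded S_def L_def] g_def ..
  finally show ?thesis .
qed

end
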